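(* Let $\gamma$ be a gauge on $\mathbb{R}^d$ and $(D,w)$ a finite positively weighted set. Then the contamination locus $\mathrm{CL}_\gamma(D,w)$ is connected, satisfies $\mathrm{FW}_\gamma(D,w)\subseteq\mathrm{CL}_\gamma(D,w)\subseteq\mathrm{EH}_\gamma(D)$, and is a union of (bounded) elementary convex sets for $D$.
   Context: A gauge $\gamma$ on $\mathbb{R}^d$ is the Minkowski functional of a convex compact set $B_\gamma$ with the origin in its interior (not necessarily symmetric); its skewness is $\sigma=\sup_{x\ne0}\gamma(x)/\gamma(-x)$; $\gamma^\circ$ is the dual gauge with unit ball $B_{\gamma^\circ}$. $\mathrm{FW}_\gamma(S,u)$ is the set of minimizers of $x\mapsto\sum_{s\in S}u_s\gamma(x-s)$. $(D,w)+(C,v)$ denotes $D\cup C$ with weights added at common points; $w_D=\sum_d w_d$. The contamination locus is $\mathrm{CL}_\gamma(D,w)=\bigcup\mathrm{FW}_\gamma((D,w)+(C,v))$, the union over all nonempty finite positively weighted sets $(C,v)$ with $\sigma v_C<w_D$. For $p\in B_{\gamma^\circ}$: if $\gamma^\circ(p)=1$, $N(p)=\mathbb{R}_{\ge0}F(p)$ with $F(p)=\{x\in B_\gamma:\langle p,x\rangle=1\}$; otherwise $N(p)=\{0\}$. For finite $S$ and $\pi=(p_s)_{s\in S}\subset B_{\gamma^\circ}$, $C_\pi=\bigcap_{s\in S}(s+N(p_s))$; a nonempty $C_\pi$ is an elementary convex set for $S$; $\mathrm{EH}_\gamma(S)$ is the union of all bounded elementary convex sets for $S$. *)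

theory Defs
  imports "HOL-Analysis.Analysis"
begin

text \<open>A gauge is given by its unit ball B: convex, compact, with 0 in the interior.\<close>
definition gauge_ball :: "'a::euclidean_space set \<Rightarrow> bool" where
  "gauge_ball B \<longleftrightarrow> convex B \<and> compact B \<and> 0 \<in> interior B"

definition gauge :: "'a::euclidean_space set \<Rightarrow> 'a \<Rightarrow> real" where
  "gauge B x = Inf {t. 0 < t \<and> x \<in> (\<lambda>y. t *\<^sub>R y) ` B}"

definition dual_gauge :: "'a::euclidean_space set \<Rightarrow> 'a \<Rightarrow> real" where
  "dual_gauge B p = Sup ((\<lambda>x. p \<bullet> x) ` B)"

definition dual_ball :: "'a::euclidean_space set \<Rightarrow> 'a set" where
  "dual_ball B = {p. dual_gauge B p \<le> 1}"

definition skewness :: "'a::euclidean_space set \<Rightarrow> real" where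
  "skewness B = Sup {gauge B x / gauge B (-x) | x. x \<noteq> 0}"

text \<open>Weighted sets: a finite set with a weight function (positive on the set).
  Sum of weighted sets: union, weights added at common points.\<close>
definition wsum_weight :: "'a set \<Rightarrow> ('a \<Rightarrow> real) \<Rightarrow> 'a set \<Rightarrow> ('a \<Rightarrow> real) \<Rightarrow> 'a \<Rightarrow> real" where
  "wsum_weight D w C v = (\<lambda>s. (if s \<in> D then w s else 0) + (if s \<in> C then v s else 0))"

definition FW :: "'a::euclidean_space set \<Rightarrow> 'a set \<Rightarrow> ('a \<Rightarrow> real) \<Rightarrow> 'a set" where
  "FW B S u = {x. \<forall>y. (\<Sum>s\<in>S. u s * gauge B (x - s)) \<le> (\<Sum>s\<in>S. u s * gauge B (y - s))}"

definition CL :: "'a::euclidean_space set \<Rightarrow> 'a set \<Rightarrow> ('a \<Rightarrow> real) \<Rightarrow> 'a set" where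
  "CL B D w = \<Union> {FW B (D \<union> C) (wsum_weight D w C v) | C v.
       finite C \<and> C \<noteq> {} \<and> (\<forall>c\<in>C. 0 < v c) \<and> skewness B * sum v C < sum w D}"

definition Fface :: "'a::euclidean_space set \<Rightarrow> 'a \<Rightarrow> 'a set" where
  "Fface B p = {x \<in> B. p \<bullet> x = 1}"

definition Ncone :: "'a::euclidean_space set \<Rightarrow> 'a \<Rightarrow> 'a set" where
  "Ncone B p = (if dual_gauge B p = 1 then {c *\<^sub>R x | c x. 0 \<le> c \<and> x \<in> Fface B p} else {0})"

definition Cpi :: "'a::euclidean_space set \<Rightarrow> 'a set \<Rightarrow> ('a \<Rightarrow> 'a) \<Rightarrow> 'a set" where
  "Cpi B S \<pi> = (\<Inter>s\<in>S. (\<lambda>y. s + y) ` Ncone B (\<pi> s))"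

definition elementary_convex :: "'a::euclidean_space set \<Rightarrow> 'a set \<Rightarrow> 'a set \<Rightarrow> bool" where
  "elementary_convex B S E \<longleftrightarrow>
     (\<exists>\<pi>. (\<forall>s\<in>S. \<pi> s \<in> dual_ball B) \<and> E = Cpi B S \<pi> \<and> E \<noteq> {})"

definition EH :: "'a::euclidean_space set \<Rightarrow> 'a set \<Rightarrow> 'a set" where
  "EH B S = \<Union> {E. elementary_convex B S E \<and> bounded E}"

end

theory Submission
  imports Defs
begin



lemma eq_by_le:
  fixes a b :: real
  assumes "0 \<le> a" "0 \<le> b" "\<And>t. 0 < t \<Longrightarrow> (a \<le> t \<longleftrightarrow> b \<le> t)"
  shows "a = b"
proof (rule ccontr)
  assume "a \<noteq> b"
  then consider "a < b" | "b < a" by linarith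
  then show False
  proof cases
    case 1 then show ?thesis using assms(3)[of "(a+b)/2"] assms(1) by auto
  next
    case 2 then show ?thesis using assms(3)[of "(a+b)/2"] assms(2) by auto
  qed
qed

locale gbl =
  fixes B :: "'a::euclidean_space set"
  assumes gb: "gauge_ball B"
begin

lemma gb_convex: "convex B" and gb_compact: "compact B" and gb_int: "0 \<in> interior B"
  using gb by (auto simp: gauge_ball_def)

lemma gb_closed: "closed B" using gb_compact compact_imp_closed by blast
lemma gb_0: "0 \<in> B" using gb_int interior_subset by blast
lemma gb_ne: "B \<noteq> {}" using gb_0 by blast

lemma gb_r: obtains r where "r > 0" "cball 0 r \<subseteq> B"
  using gb_int mem_interior_cball by blast

lemma gb_R: obtains R where "R > 0" "\<And>x. x \<in> B \<Longrightarrow> norm x \<le> R"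
  using gb_compact compact_imp_bounded bounded_pos by metis

lemma memT: "0 < t \<Longrightarrow> (x \<in> (\<lambda>y. t *\<^sub>R y) ` B \<longleftrightarrow> inverse t *\<^sub>R x \<in> B)"
  by (auto simp: image_iff intro!: bexI[of _ "inverse t *\<^sub>R x"])

lemma T_mono:
  assumes "0 < t" "t \<le> t'" "inverse t *\<^sub>R x \<in> B"
  shows "inverse t' *\<^sub>R x \<in> B"
proof -
  have t': "0 < t'" using assms by linarith
  have m: "(t/t') *\<^sub>R (inverse t *\<^sub>R x) + (1 - t/t') *\<^sub>R 0 \<in> B"
    by (rule convexD[OF gb_convex assms(3) gb_0]) (use assms t' in auto)
  have "(t/t') *\<^sub>R (inverse t *\<^sub>R x) + (1 - t/t') *\<^sub>R 0 = inverse t' *\<^sub>R x"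
    using assms t' by (simp add: field_simps)
  then show ?thesis using m by metis
qed

lemma T_ne: "{t. 0 < t \<and> x \<in> (\<lambda>y. t *\<^sub>R y) ` B} \<noteq> {}"
proof -
  obtain r where r: "r > 0" "cball 0 r \<subseteq> B" by (rule gb_r)
  define t where "t = norm x / r + 1"
  have t: "0 < t" using r unfolding t_def by (smt (verit) divide_nonneg_pos norm_ge_zero)
  have "norm (inverse t *\<^sub>R x) \<le> r"
  proof -
    have "norm x \<le> r * t" using r by (simp add: t_def field_simps)
    then show ?thesis using t r by (simp add: field_simps)
  qed
  then have "inverse t *\<^sub>R x \<in> B" using r by auto
  then show ?thesis using t memT by blast
qed

lemma gauge_char:
  assumes "0 < t"
  shows "gauge B x \<le> t \<longleftrightarrow> inverse t *\<^sub>R x \<in> B"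
proof -
  let ?T = "{t. 0 < t \<and> x \<in> (\<lambda>y. t *\<^sub>R y) ` B}"
  have bdd: "bdd_below ?T" by (rule bdd_belowI[of _ 0]) auto
  show ?thesis
  proof
    assume "inverse t *\<^sub>R x \<in> B"
    then have "t \<in> ?T" using assms memT by blast
    then show "gauge B x \<le> t" unfolding gauge_def using bdd by (rule cInf_lower)
  next
    assume le: "gauge B x \<le> t"
    have all: "inverse (t + e) *\<^sub>R x \<in> B" if e: "e > 0" for e
    proof -
      have "Inf ?T < t + e" using le e unfolding gauge_def by linarith
      then obtain t' where t': "t' \<in> ?T" "t' < t + e"
        using cInf_less_iff[OF T_ne bdd] by blast
      then show ?thesis using T_mono[of t' "t+e" x] memT by auto
    qed
    have lim: "(\<lambda>n. inverse (t + inverse (real (Suc n))) *\<^sub>R x) \<longlonglongrightarrow> inverse (t + 0) *\<^sub>R x"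
      by (intro tendsto_intros LIMSEQ_inverse_real_of_nat) (use assms in auto)
    show "inverse t *\<^sub>R x \<in> B"
      using closed_sequential_limits[THEN iffD1, OF gb_closed, rule_format, of "\<lambda>n. inverse (t + inverse (real (Suc n))) *\<^sub>R x"]
        all lim by auto
  qed
qed

lemma gauge_nonneg: "0 \<le> gauge B x"
  unfolding gauge_def by (rule cInf_greatest[OF T_ne]) auto

lemma gauge_le_1: "gauge B x \<le> 1 \<longleftrightarrow> x \<in> B"
  using gauge_char[of 1 x] by simp

lemma gauge_0: "gauge B 0 = 0"
proof -
  have "gauge B 0 \<le> 0 + e" if "e > 0" for e using gauge_char[of e 0] that gb_0 by simp
  then show ?thesis using gauge_nonneg[of 0] field_le_epsilon by (metis order_antisym)
qed

lemma gauge_homog: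
  assumes "0 \<le> c" shows "gauge B (c *\<^sub>R x) = c * gauge B x"
proof (cases "c = 0")
  case True then show ?thesis by (simp add: gauge_0)
next
  case False
  then have c: "c > 0" using assms by simp
  show ?thesis
  proof (rule eq_by_le)
    show "0 \<le> gauge B (c *\<^sub>R x)" by (rule gauge_nonneg)
    show "0 \<le> c * gauge B x" using c gauge_nonneg by simp
    fix t :: real assume t: "0 < t"
    have "gauge B (c *\<^sub>R x) \<le> t \<longleftrightarrow> inverse t *\<^sub>R (c *\<^sub>R x) \<in> B" using gauge_char t by blast
    also have "\<dots> \<longleftrightarrow> inverse (t/c) *\<^sub>R x \<in> B" using c by (simp add: field_simps)
    also have "\<dots> \<longleftrightarrow> gauge B x \<le> t / c" using gauge_char c t by simp
    also have "\<dots> \<longleftrightarrow> c * gauge B x \<le> t" using c by (simp add: field_simps)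
    finally show "gauge B (c *\<^sub>R x) \<le> t \<longleftrightarrow> c * gauge B x \<le> t" .
  qed
qed

lemma gauge_add: "gauge B (x + y) \<le> gauge B x + gauge B y"
proof (rule field_le_epsilon)
  fix e :: real assume e: "e > 0"
  define a where "a = gauge B x + e/2"
  define b where "b = gauge B y + e/2"
  have a: "a > 0" using e gauge_nonneg[of x] unfolding a_def by linarith
  have b: "b > 0" using e gauge_nonneg[of y] unfolding b_def by linarith
  have "gauge B x \<le> a" unfolding a_def using e by simp
  then have xa: "inverse a *\<^sub>R x \<in> B" using gauge_char[OF a, of x] by simp
  have "gauge B y \<le> b" unfolding b_def using e by simp
  then have yb: "inverse b *\<^sub>R y \<in> B" using gauge_char[OF b, of y] by simp
  have m: "(a/(a+b)) *\<^sub>R (inverse a *\<^sub>R x) + (b/(a+b)) *\<^sub>R (inverse b *\<^sub>R y) \<in> B"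
    by (rule convexD[OF gb_convex xa yb]) (use a b in \<open>simp_all add: add_divide_distrib[symmetric]\<close>)
  have "(a/(a+b)) *\<^sub>R (inverse a *\<^sub>R x) + (b/(a+b)) *\<^sub>R (inverse b *\<^sub>R y) = inverse (a+b) *\<^sub>R (x+y)"
    using a b by (simp add: field_simps scaleR_add_right)
  then have "inverse (a+b) *\<^sub>R (x+y) \<in> B" using m by metis
  then have "gauge B (x+y) \<le> a + b" using gauge_char a b by simp
  then show "gauge B (x + y) \<le> gauge B x + gauge B y + e" unfolding a_def b_def by simp
qed

lemma gauge_diff_le: "gauge B x \<le> gauge B y + gauge B (x - y)"
  using gauge_add[of y "x - y"] by simp

lemma gauge_le_norm:
  assumes "r > 0" "cball 0 r \<subseteq> B"
  shows "gauge B x \<le> norm x / r"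
proof (cases "x = 0")
  case True then show ?thesis by (simp add: gauge_0)
next
  case False
  then have t: "norm x / r > 0" using assms by simp
  have "norm (inverse (norm x / r) *\<^sub>R x) = r" using False assms by simp
  then have "inverse (norm x / r) *\<^sub>R x \<in> B" using assms by auto
  then show ?thesis using gauge_char[OF t] by simp
qed

lemma norm_le_gauge:
  assumes "R > 0" "\<And>x. x \<in> B \<Longrightarrow> norm x \<le> R"
  shows "norm x \<le> R * gauge B x"
proof (rule field_le_epsilon)
  fix e :: real assume e: "e > 0"
  define t where "t = gauge B x + e / R"
  have t: "t > 0" using gauge_nonneg e assms unfolding t_def by (smt (verit) divide_pos_pos)
  have "gauge B x \<le> t" unfolding t_def using e assms by simp
  then have "inverse t *\<^sub>R x \<in> B" using gauge_char[OF t] by simp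
  then have "norm (inverse t *\<^sub>R x) \<le> R" using assms by blast
  then have "norm x \<le> R * t" using t by (simp add: field_simps)
  moreover have "R * t = R * gauge B x + e" using assms unfolding t_def by (simp add: field_simps)
  ultimately show "norm x \<le> R * gauge B x + e" by linarith
qed

lemma gauge_pos: "x \<noteq> 0 \<Longrightarrow> gauge B x > 0"
proof -
  assume x: "x \<noteq> 0"
  obtain R where R: "R > 0" "\<And>x. x \<in> B \<Longrightarrow> norm x \<le> R" using gb_R by metis
  have "norm x \<le> R * gauge B x" by (rule norm_le_gauge[OF R])
  then show ?thesis using x R gauge_nonneg[of x] by (smt (verit) mult_nonneg_nonneg zero_less_norm_iff mult_le_0_iff)
qed

lemma gauge_in_B: "x \<noteq> 0 \<Longrightarrow> inverse (gauge B x) *\<^sub>R x \<in> B"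
  using gauge_char[OF gauge_pos] by blast

lemma gauge_normalized: "x \<noteq> 0 \<Longrightarrow> gauge B (inverse (gauge B x) *\<^sub>R x) = 1"
  using gauge_homog[of "inverse (gauge B x)" x] gauge_pos[of x] by simp

lemma gauge_convex:
  assumes "0 \<le> u" "u \<le> 1"
  shows "gauge B (u *\<^sub>R x + (1-u) *\<^sub>R y) \<le> u * gauge B x + (1-u) * gauge B y"
  using gauge_add[of "u *\<^sub>R x" "(1-u) *\<^sub>R y"] gauge_homog[of u x] gauge_homog[of "1-u" y] assms by simp

lemma gauge_lipschitz:
  assumes "r > 0" "cball 0 r \<subseteq> B"
  shows "\<bar>gauge B x - gauge B y\<bar> \<le> norm (x - y) / r"
proof -
  have "gauge B x \<le> gauge B y + norm (x - y) / r"
    using gauge_diff_le[of x y] gauge_le_norm[OF assms, of "x - y"] by simp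
  moreover have "gauge B y \<le> gauge B x + norm (x - y) / r"
    using gauge_diff_le[of y x] gauge_le_norm[OF assms, of "y - x"] by (simp add: norm_minus_commute)
  ultimately show ?thesis by linarith
qed

lemma gauge_cont: "continuous_on UNIV (gauge B)"
proof -
  obtain r where r: "r > 0" "cball 0 r \<subseteq> B" by (rule gb_r)
  show ?thesis
    unfolding continuous_on_iff
  proof (intro ballI allI impI)
    fix x :: 'a and e :: real assume e: "e > 0"
    show "\<exists>d>0. \<forall>x'\<in>UNIV. dist x' x < d \<longrightarrow> dist (gauge B x') (gauge B x) < e"
    proof (intro exI[of _ "e * r"] conjI ballI impI)
      show "e * r > 0" using e r by simp
      fix x' assume "dist x' x < e * r"
      then have "norm (x' - x) / r < e" using r by (simp add: dist_norm field_simps)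
      then show "dist (gauge B x') (gauge B x) < e"
        using gauge_lipschitz[OF r, of x' x] by (simp add: dist_real_def)
    qed
  qed
qed

lemma gauge_tendsto: "(f \<longlongrightarrow> l) F \<Longrightarrow> ((\<lambda>n. gauge B (f n)) \<longlongrightarrow> gauge B l) F"
  using continuous_on_tendsto_compose[OF gauge_cont] by auto


lemma dual_bdd: "bdd_above ((\<lambda>x. p \<bullet> x) ` B)"
proof -
  obtain R where R: "R > 0" "\<And>x. x \<in> B \<Longrightarrow> norm x \<le> R" using gb_R by metis
  have "p \<bullet> x \<le> norm p * R" if "x \<in> B" for x
    using Cauchy_Schwarz_ineq2[of p x] R(2)[OF that] mult_left_mono[of "norm x" R "norm p"]
    by (smt (verit) abs_le_iff norm_ge_zero)
  then show ?thesis by (intro bdd_aboveI2) 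
qed

lemma inner_le_dual: "x \<in> B \<Longrightarrow> p \<bullet> x \<le> dual_gauge B p"
  unfolding dual_gauge_def by (rule cSup_upper) (use dual_bdd in auto)

lemma dual_le_iff: "dual_gauge B p \<le> c \<longleftrightarrow> (\<forall>x\<in>B. p \<bullet> x \<le> c)"
  unfolding dual_gauge_def using gb_ne by (subst cSup_le_iff) (auto simp: dual_bdd)

lemma dual_nonneg: "0 \<le> dual_gauge B p"
  using inner_le_dual[OF gb_0, of p] by simp

lemma inner_le_dual_gauge: "p \<bullet> y \<le> dual_gauge B p * gauge B y"
proof (cases "y = 0")
  case True then show ?thesis by (simp add: gauge_0)
next
  case False
  have "p \<bullet> (inverse (gauge B y) *\<^sub>R y) \<le> dual_gauge B p" using inner_le_dual gauge_in_B[OF False] by blast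
  then have "inverse (gauge B y) * (p \<bullet> y) \<le> dual_gauge B p" by simp
  then show ?thesis using gauge_pos[OF False] by (simp add: field_simps mult.commute)
qed

lemma dual_ball_inner: "p \<in> dual_ball B \<Longrightarrow> p \<bullet> y \<le> gauge B y"
  using inner_le_dual_gauge[of p y] gauge_nonneg[of y] mult_right_mono[of "dual_gauge B p" 1 "gauge B y"]
  unfolding dual_ball_def by auto

lemma dual_attains: "\<exists>x\<in>B. p \<bullet> x = dual_gauge B p"
proof -
  obtain x where x: "x \<in> B" "\<forall>y\<in>B. p \<bullet> y \<le> p \<bullet> x"
  proof -
    have "continuous_on B (\<lambda>x. p \<bullet> x)" by (intro continuous_intros)
    then show ?thesis using continuous_attains_sup[OF gb_compact gb_ne, of "\<lambda>x. p \<bullet> x"] that by blast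
  qed
  then have "dual_gauge B p \<le> p \<bullet> x" using dual_le_iff by blast
  then show ?thesis using x inner_le_dual[of x p] by force
qed

lemma dual_norm:
  assumes "r > 0" "cball 0 r \<subseteq> B"
  shows "r * norm p \<le> dual_gauge B p"
proof (cases "p = 0")
  case True then show ?thesis using dual_nonneg by simp
next
  case False
  have "(r / norm p) *\<^sub>R p \<in> B" using assms False by auto
  then have "p \<bullet> ((r / norm p) *\<^sub>R p) \<le> dual_gauge B p" by (rule inner_le_dual)
  moreover have "p \<bullet> ((r / norm p) *\<^sub>R p) = r * norm p"
    using False by (simp add: power2_norm_eq_inner[symmetric] power2_eq_square)
  ultimately show ?thesis by simp
qed

lemma dual_zero: "dual_gauge B q \<le> 0 \<Longrightarrow> q = 0"
proof -
  assume a: "dual_gauge B q \<le> 0"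
  obtain r where r: "r > 0" "cball 0 r \<subseteq> B" by (rule gb_r)
  show "q = 0" using dual_norm[OF r, of q] a r by (smt (verit) mult_pos_pos zero_less_norm_iff)
qed

lemma dual_scale: "0 \<le> c \<Longrightarrow> dual_gauge B (c *\<^sub>R q) \<le> c * dual_gauge B q"
  unfolding dual_le_iff using inner_le_dual mult_left_mono by fastforce

lemma dual_sum_le:
  assumes "\<forall>c\<in>C. q c \<in> dual_ball B \<and> 0 \<le> v c"
  shows "dual_gauge B (\<Sum>c\<in>C. v c *\<^sub>R q c) \<le> sum v C"
  unfolding dual_le_iff
proof
  fix x assume x: "x \<in> B"
  have "(\<Sum>c\<in>C. v c *\<^sub>R q c) \<bullet> x = (\<Sum>c\<in>C. v c * (q c \<bullet> x))" by (simp add: inner_sum_left)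
  also have "\<dots> \<le> (\<Sum>c\<in>C. v c * 1)"
  proof (rule sum_mono)
    fix c assume "c \<in> C"
    then have "q c \<bullet> x \<le> 1" "0 \<le> v c" using assms x inner_le_dual[OF x, of "q c"] unfolding dual_ball_def by auto
    then show "v c * (q c \<bullet> x) \<le> v c * 1" by (rule mult_left_mono)
  qed
  finally show "(\<Sum>c\<in>C. v c *\<^sub>R q c) \<bullet> x \<le> sum v C" by simp
qed

lemma dual_ball_closed: "closed (dual_ball B)"
proof -
  have "dual_ball B = (\<Inter>x\<in>B. {p. x \<bullet> p \<le> 1})"
    unfolding dual_ball_def using dual_le_iff by (auto simp: inner_commute)
  then show ?thesis by (auto intro: closed_INT closed_halfspace_le)
qed

lemma dual_ball_bounded: "bounded (dual_ball B)"
proof -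
  obtain r where r: "r > 0" "cball 0 r \<subseteq> B" by (rule gb_r)
  have "norm p \<le> 1 / r" if "p \<in> dual_ball B" for p
    using dual_norm[OF r, of p] that r unfolding dual_ball_def by (simp add: field_simps)
  then show ?thesis unfolding bounded_iff by blast
qed

lemma dual_ball_compact: "compact (dual_ball B)"
  using dual_ball_closed dual_ball_bounded by (simp add: compact_eq_bounded_closed)

lemma dual_ball_convex: "convex (dual_ball B)"
proof -
  have "dual_ball B = (\<Inter>x\<in>B. {p. x \<bullet> p \<le> 1})"
    unfolding dual_ball_def using dual_le_iff by (auto simp: inner_commute)
  then show ?thesis by (auto intro: convex_INT convex_halfspace_le)
qed

lemma subgrad_exists: "\<exists>p\<in>dual_ball B. p \<bullet> y = gauge B y"
proof (cases "y = 0")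
  case True
  have "(0::'a) \<in> dual_ball B" unfolding dual_ball_def using dual_le_iff by simp
  then show ?thesis using True gauge_0 by force
next
  case False
  define z where "z = inverse (gauge B y) *\<^sub>R y"
  have zB: "z \<in> B" unfolding z_def by (rule gauge_in_B[OF False])
  have gz: "gauge B z = 1" unfolding z_def by (rule gauge_normalized[OF False])
  have ri: "rel_interior B = interior B" using gb_int rel_interior_nonempty_interior by blast
  have zni: "z \<notin> interior B"
  proof
    assume "z \<in> interior B"
    then obtain e where e: "e > 0" "cball z e \<subseteq> B" using mem_interior_cball by blast
    have zn: "z \<noteq> 0" using gz gauge_0 by auto
    define w where "w = (1 + e / norm z) *\<^sub>R z"
    have "z - w = - ((e / norm z) *\<^sub>R z)" by (simp add: w_def algebra_simps)
    then have "dist z w = (e / norm z) * norm z" using e by (simp add: dist_norm)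
    then have "dist z w = e" using zn by simp
    then have "w \<in> cball z e" by simp
    then have wB: "w \<in> B" using e(2) by blast
    have "0 \<le> 1 + e / norm z" using e by (simp add: add_nonneg_nonneg)
    then have "gauge B w = (1 + e / norm z) * 1" unfolding w_def using gz gauge_homog[of "1 + e / norm z" z]
      by simp
    then have "gauge B w > 1" using e zn by simp
    moreover have "gauge B w \<le> 1" using gauge_le_1[THEN iffD2, OF wB] .
    ultimately show False by linarith
  qed
  have zc: "z \<in> closure B" using zB closure_subset by blast
  have zr: "z \<notin> rel_interior B" using zni ri by simp
  obtain a where a: "a \<noteq> 0" "\<And>y. y \<in> closure B \<Longrightarrow> a \<bullet> z \<le> a \<bullet> y"
    using supporting_hyperplane_relative_frontier[OF gb_convex zc zr] by metis
  have cl: "closure B = B" using gb_closed by simp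
  define b where "b = - a"
  have bz: "\<And>y. y \<in> B \<Longrightarrow> b \<bullet> y \<le> b \<bullet> z" using a cl unfolding b_def by auto
  obtain r where r: "r > 0" "cball 0 r \<subseteq> B" by (rule gb_r)
  have "r * norm b \<le> dual_gauge B b" by (rule dual_norm[OF r])
  moreover have "dual_gauge B b \<le> b \<bullet> z" using bz dual_le_iff by blast
  moreover have "b \<noteq> 0" using a(1) unfolding b_def by simp
  then have "r * norm b > 0" using r by simp
  ultimately have bzp: "b \<bullet> z > 0" by linarith
  define p where "p = inverse (b \<bullet> z) *\<^sub>R b"
  have "\<forall>x\<in>B. p \<bullet> x \<le> 1"
  proof
    fix x assume "x \<in> B"
    then have "b \<bullet> x \<le> b \<bullet> z" by (rule bz)
    then show "p \<bullet> x \<le> 1" using bzp unfolding p_def by (simp add: field_simps)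
  qed
  then have pd: "p \<in> dual_ball B" unfolding dual_ball_def using dual_le_iff by simp
  have "p \<bullet> z = 1" using bzp unfolding p_def by simp
  then have "p \<bullet> y = gauge B y" unfolding z_def using gauge_pos[OF False] by (simp add: field_simps)
  then show ?thesis using pd by blast
qed

lemma Ncone_char:
  assumes "p \<in> dual_ball B"
  shows "y \<in> Ncone B p \<longleftrightarrow> p \<bullet> y = gauge B y"
proof
  assume y: "y \<in> Ncone B p"
  show "p \<bullet> y = gauge B y"
  proof (cases "dual_gauge B p = 1")
    case False then show ?thesis using y by (simp add: Ncone_def gauge_0)
  next
    case True
    then obtain c x where cx: "y = c *\<^sub>R x" "0 \<le> c" "x \<in> B" "p \<bullet> x = 1"
      using y unfolding Ncone_def Fface_def by auto
    have "gauge B x \<le> 1" using cx gauge_le_1 by simp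
    moreover have "p \<bullet> x \<le> gauge B x" using dual_ball_inner[OF assms] by blast
    ultimately have "gauge B x = 1" using cx by simp
    then show ?thesis using cx gauge_homog by simp
  qed
next
  assume h: "p \<bullet> y = gauge B y"
  show "y \<in> Ncone B p"
  proof (cases "y = 0")
    case True
    show ?thesis
    proof (cases "dual_gauge B p = 1")
      case False then show ?thesis using True by (simp add: Ncone_def)
    next
      case T1: True
      obtain x where "x \<in> B" "p \<bullet> x = dual_gauge B p" using dual_attains by blast
      then have "x \<in> Fface B p" using T1 by (simp add: Fface_def)
      then have "(0::real) *\<^sub>R x \<in> {c *\<^sub>R x |c x. 0 \<le> c \<and> x \<in> Fface B p}" by blast
      then show ?thesis using True T1 unfolding Ncone_def by simp
    qed
  next
    case False
    define z where "z = inverse (gauge B y) *\<^sub>R y"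
    have zB: "z \<in> B" unfolding z_def by (rule gauge_in_B[OF False])
    have pz: "p \<bullet> z = 1" using h gauge_pos[OF False] unfolding z_def by simp
    have "1 \<le> dual_gauge B p" using inner_le_dual[OF zB, of p] pz by simp
    then have d1: "dual_gauge B p = 1" using assms unfolding dual_ball_def by simp
    have "y = gauge B y *\<^sub>R z" using gauge_pos[OF False] unfolding z_def by simp
    then have "y \<in> {c *\<^sub>R x |c x. 0 \<le> c \<and> x \<in> Fface B p}"
      using zB pz gauge_nonneg[of y] unfolding Fface_def by blast
    then show ?thesis using d1 unfolding Ncone_def by simp
  qed
qed

lemma Cpi_char:
  assumes "\<forall>s\<in>S. \<pi> s \<in> dual_ball B"
  shows "x \<in> Cpi B S \<pi> \<longleftrightarrow> (\<forall>s\<in>S. \<pi> s \<bullet> (x - s) = gauge B (x - s))"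
proof -
  have "x \<in> (\<lambda>y. s + y) ` N \<longleftrightarrow> x - s \<in> N" for s N
    by (auto simp: image_iff intro!: bexI[of _ "x - s"])
  then show ?thesis unfolding Cpi_def using Ncone_char assms by auto
qed

lemma skew_bdd: "bdd_above {gauge B x / gauge B (-x) | x. x \<noteq> 0}"
proof -
  obtain r where r: "r > 0" "cball 0 r \<subseteq> B" by (rule gb_r)
  obtain R where R: "R > 0" "\<And>x. x \<in> B \<Longrightarrow> norm x \<le> R" using gb_R by metis
  have "gauge B x / gauge B (-x) \<le> R / r" if x: "x \<noteq> 0" for x
  proof -
    have a: "gauge B x \<le> norm x / r" by (rule gauge_le_norm[OF r])
    have b: "norm x \<le> R * gauge B (-x)" using norm_le_gauge[OF R, of "-x"] by simp
    have gp: "gauge B (-x) > 0" using gauge_pos x by simp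
    have "gauge B x * r \<le> norm x" using a r by (simp add: field_simps)
    also have "\<dots> \<le> R * gauge B (-x)" by (rule b)
    finally show ?thesis using gp r by (simp add: field_simps)
  qed
  then show ?thesis by (intro bdd_aboveI[of _ "R/r"]) auto
qed

lemma skew_le: "gauge B x \<le> skewness B * gauge B (-x)"
proof (cases "x = 0")
  case True then show ?thesis by (simp add: gauge_0)
next
  case False
  have "gauge B x / gauge B (-x) \<le> skewness B"
    unfolding skewness_def by (rule cSup_upper) (use False skew_bdd in auto)
  then show ?thesis using gauge_pos[of "-x"] False by (simp add: field_simps)
qed

lemma skew_nonneg: "0 \<le> skewness B"
proof -
  obtain b :: 'a where b: "b \<in> Basis" using nonempty_Basis by blast
  then have b0: "b \<noteq> 0" by auto
  have "gauge B b / gauge B (-b) \<le> skewness B"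
    unfolding skewness_def by (rule cSup_upper) (use b0 skew_bdd in auto)
  moreover have "0 \<le> gauge B b / gauge B (-b)" using gauge_nonneg by simp
  ultimately show ?thesis by linarith
qed

lemma skew_le': "gauge B (-x) \<le> skewness B * gauge B x"
  using skew_le[of "-x"] by simp

end



lemma finite_subseq:
  fixes X :: "nat \<Rightarrow> 'b \<Rightarrow> 'a::metric_space"
  assumes "finite S" "compact K" "\<forall>n. \<forall>s\<in>S. X n s \<in> K"
  shows "\<exists>r l. strict_mono r \<and> (\<forall>s\<in>S. l s \<in> K \<and> (\<lambda>n. X (r n) s) \<longlonglongrightarrow> l s)"
  using assms(1,3)
proof (induction S rule: finite_induct)
  case empty
  show ?case by (rule exI[of _ id]) (auto simp: strict_mono_def)
next
  case (insert a S)
  then obtain r l where rl: "strict_mono r" "\<forall>s\<in>S. l s \<in> K \<and> (\<lambda>n. X (r n) s) \<longlonglongrightarrow> l s" by auto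
  have "\<forall>n. X (r n) a \<in> K" using insert.prems by auto
  then obtain la r2 where r2: "la \<in> K" "strict_mono r2" "((\<lambda>n. X (r n) a) \<circ> r2) \<longlonglongrightarrow> la"
    using seq_compactE[OF compact_imp_seq_compact[OF assms(2)]] by metis
  show ?case
  proof (intro exI conjI ballI)
    show "strict_mono (r \<circ> r2)" using rl r2 strict_mono_o by blast
    fix s assume s: "s \<in> insert a S"
    show "(l(a := la)) s \<in> K" using s rl r2 by auto
    show "(\<lambda>n. X ((r \<circ> r2) n) s) \<longlonglongrightarrow> (l(a := la)) s"
    proof (cases "s = a")
      case True then show ?thesis using r2 by (simp add: comp_def)
    next
      case False
      then have "s \<in> S" using s by simp
      then have "(\<lambda>n. X (r n) s) \<longlonglongrightarrow> l s" using rl by blast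
      from LIMSEQ_subseq_LIMSEQ[OF this r2(2)] show ?thesis using False by (simp add: comp_def)
    qed
  qed
qed

context gbl
begin

lemma sub_ineq:
  assumes "\<forall>s\<in>S. 0 \<le> u s" "\<forall>s\<in>S. p s \<in> dual_ball B \<and> p s \<bullet> (y - s) = gauge B (y - s)"
  shows "(\<Sum>s\<in>S. u s * gauge B (y - s)) + (\<Sum>s\<in>S. u s *\<^sub>R p s) \<bullet> (z - y) \<le> (\<Sum>s\<in>S. u s * gauge B (z - s))"
proof -
  have "(\<Sum>s\<in>S. u s * gauge B (y - s)) + (\<Sum>s\<in>S. u s *\<^sub>R p s) \<bullet> (z - y)
      = (\<Sum>s\<in>S. u s * (p s \<bullet> (z - s)))"
  proof -
    have "(\<Sum>s\<in>S. u s *\<^sub>R p s) \<bullet> (z - y) = (\<Sum>s\<in>S. u s * (p s \<bullet> (z - y)))" by (simp add: inner_sum_left)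
    moreover have "(\<Sum>s\<in>S. u s * gauge B (y - s)) = (\<Sum>s\<in>S. u s * (p s \<bullet> (y - s)))"
      using assms(2) by (intro sum.cong) auto
    moreover have "u s * (p s \<bullet> (y - s)) + u s * (p s \<bullet> (z - y)) = u s * (p s \<bullet> (z - s))" for s
      by (simp add: inner_diff_right algebra_simps)
    ultimately show ?thesis by (simp add: sum.distrib[symmetric])
  qed
  also have "\<dots> \<le> (\<Sum>s\<in>S. u s * gauge B (z - s))"
  proof (rule sum_mono)
    fix s assume s: "s \<in> S"
    then have "p s \<bullet> (z - s) \<le> gauge B (z - s)" using assms(2) dual_ball_inner by blast
    then show "u s * (p s \<bullet> (z - s)) \<le> u s * gauge B (z - s)" using assms(1) s mult_left_mono by blast
  qed
  finally show ?thesis .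
qed

lemma opt_hard:
  assumes S: "finite S" and u: "\<forall>s\<in>S. 0 \<le> u s"
   and min: "\<forall>y. (\<Sum>s\<in>S. u s * gauge B (x - s)) - h \<bullet> x \<le> (\<Sum>s\<in>S. u s * gauge B (y - s)) - h \<bullet> y"
  shows "\<exists>p. (\<forall>s\<in>S. p s \<in> dual_ball B \<and> p s \<bullet> (x - s) = gauge B (x - s)) \<and> (\<Sum>s\<in>S. u s *\<^sub>R p s) = h"
proof (rule ccontr)
  assume nex: "\<not> ?thesis"
  define P where "P = {p. \<forall>s\<in>S. p s \<in> dual_ball B \<and> p s \<bullet> (x - s) = gauge B (x - s)}"
  define F where "F = (\<lambda>p. (\<Sum>s\<in>S. u s *\<^sub>R p s) - h)"
  define K where "K = F ` P"
  have K0: "0 \<notin> K" using nex unfolding K_def P_def F_def by auto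
  have Kc: "convex K"
  proof (rule convexI)
    fix k1 k2 and a b :: real assume k: "k1 \<in> K" "k2 \<in> K" and ab0: "0 \<le> a" "0 \<le> b" "a + b = 1"
    have ab: "0 \<le> a \<and> 0 \<le> b \<and> a + b = 1" using ab0 by simp
    obtain p1 p2 where p: "p1 \<in> P" "p2 \<in> P" "k1 = F p1" "k2 = F p2" using k unfolding K_def by auto
    define p where "p = (\<lambda>s. a *\<^sub>R p1 s + b *\<^sub>R p2 s)"
    have "p \<in> P" unfolding P_def
    proof (intro CollectI ballI conjI)
      fix s assume s: "s \<in> S"
      show "p s \<in> dual_ball B" unfolding p_def
        by (rule convexD[OF dual_ball_convex]) (use p s ab in \<open>auto simp: P_def\<close>)
      have "p s \<bullet> (x - s) = a * (p1 s \<bullet> (x - s)) + b * (p2 s \<bullet> (x - s))" unfolding p_def by (simp add: inner_add_left)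
      also have "\<dots> = (a + b) * gauge B (x - s)" using p s unfolding P_def by (simp add: algebra_simps)
      finally show "p s \<bullet> (x - s) = gauge B (x - s)" using ab by simp
    qed
    moreover have "a *\<^sub>R k1 + b *\<^sub>R k2 = F p"
    proof -
      have "F p = (\<Sum>s\<in>S. a *\<^sub>R (u s *\<^sub>R p1 s) + b *\<^sub>R (u s *\<^sub>R p2 s)) - (a + b) *\<^sub>R h"
        unfolding F_def p_def using ab by (simp add: scaleR_add_right algebra_simps)
      also have "\<dots> = a *\<^sub>R k1 + b *\<^sub>R k2"
        unfolding p F_def by (simp add: sum.distrib scaleR_sum_right algebra_simps)
      finally show ?thesis by simp
    qed
    ultimately show "a *\<^sub>R k1 + b *\<^sub>R k2 \<in> K" unfolding K_def by blast
  qed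
  have Fcont: "(\<lambda>n. F (q n)) \<longlonglongrightarrow> F l" if "\<forall>s\<in>S. (\<lambda>n. q n s) \<longlonglongrightarrow> l s" for q l
    unfolding F_def using that by (intro tendsto_intros) auto
  have Pclosed: "l \<in> P" if "\<forall>n. q n \<in> P" "\<forall>s\<in>S. l s \<in> dual_ball B \<and> (\<lambda>n. q n s) \<longlonglongrightarrow> l s" for q l
    unfolding P_def
  proof (intro CollectI ballI conjI)
    fix s assume s: "s \<in> S"
    show "l s \<in> dual_ball B" using that s by blast
    have "(\<lambda>n. q n s \<bullet> (x - s)) \<longlonglongrightarrow> l s \<bullet> (x - s)" using that s by (intro tendsto_intros) auto
    moreover have "(\<lambda>n. q n s \<bullet> (x - s)) = (\<lambda>n. gauge B (x - s))" using that s unfolding P_def by auto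
    ultimately have "(\<lambda>n. gauge B (x - s)) \<longlonglongrightarrow> l s \<bullet> (x - s)" by simp
    then show "l s \<bullet> (x - s) = gauge B (x - s)" using LIMSEQ_unique[OF _ tendsto_const] by metis
  qed
  have Kcl: "closed K"
    unfolding closed_sequential_limits
  proof (intro allI impI)
    fix k l assume kl: "(\<forall>n. k n \<in> K) \<and> k \<longlonglongrightarrow> l"
    then have ex: "\<forall>n. \<exists>p. p \<in> P \<and> k n = F p" unfolding K_def by blast
    define q where "q = (\<lambda>n. SOME p. p \<in> P \<and> k n = F p)"
    have q: "\<forall>n. q n \<in> P \<and> k n = F (q n)" unfolding q_def using ex someI_ex by (metis (mono_tags, lifting))
    have "\<forall>n. \<forall>s\<in>S. q n s \<in> dual_ball B" using q unfolding P_def by blast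
    then obtain r lp where r: "strict_mono r" "\<forall>s\<in>S. lp s \<in> dual_ball B \<and> (\<lambda>n. q (r n) s) \<longlonglongrightarrow> lp s"
      using finite_subseq[OF S dual_ball_compact] by blast
    have lpP: "lp \<in> P" by (rule Pclosed[of "\<lambda>n. q (r n)"]) (use q r in auto)
    have "(\<lambda>n. F (q (r n))) \<longlonglongrightarrow> F lp" using Fcont[of "\<lambda>n. q (r n)" lp] r by simp
    moreover have "(\<lambda>n. F (q (r n))) \<longlonglongrightarrow> l"
      using LIMSEQ_subseq_LIMSEQ[OF conjunct2[OF kl] r(1)] q by (simp add: comp_def)
    ultimately have "l = F lp" using LIMSEQ_unique by blast
    then show "l \<in> K" using lpP unfolding K_def by blast
  qed
  from separating_hyperplane_closed_0[OF Kc Kcl K0]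
  obtain a b where ab: "a \<noteq> 0" "0 < b" "\<forall>k\<in>K. b < a \<bullet> k" by auto
  define z where "z = (\<lambda>n. x - inverse (real (Suc n)) *\<^sub>R a)"
  define q where "q = (\<lambda>n s. SOME p. p \<in> dual_ball B \<and> p \<bullet> (z n - s) = gauge B (z n - s))"
  have q: "\<forall>n s. q n s \<in> dual_ball B \<and> q n s \<bullet> (z n - s) = gauge B (z n - s)"
  proof (intro allI)
    fix n s
    have "\<exists>p. p \<in> dual_ball B \<and> p \<bullet> (z n - s) = gauge B (z n - s)" using subgrad_exists by blast
    then show "q n s \<in> dual_ball B \<and> q n s \<bullet> (z n - s) = gauge B (z n - s)" unfolding q_def by (rule someI_ex)
  qed
  have key: "F (q n) \<bullet> a \<le> 0" for n
  proof -
    define t where "t = inverse (real (Suc n))"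
    have t: "t > 0" unfolding t_def by simp
    have zn: "z n = x - t *\<^sub>R a" unfolding z_def t_def by simp
    have "(\<Sum>s\<in>S. u s * gauge B (z n - s)) = (\<Sum>s\<in>S. u s * (q n s \<bullet> (x - s)) - t * (u s * (q n s \<bullet> a)))"
    proof (rule sum.cong[OF refl])
      fix s assume "s \<in> S"
      have "gauge B (z n - s) = q n s \<bullet> (z n - s)" using q by simp
      also have "\<dots> = q n s \<bullet> (x - s) - t * (q n s \<bullet> a)" unfolding zn by (simp add: inner_diff_right)
      finally have e: "gauge B (z n - s) = q n s \<bullet> (x - s) - t * (q n s \<bullet> a)" .
      show "u s * gauge B (z n - s) = u s * (q n s \<bullet> (x - s)) - t * (u s * (q n s \<bullet> a))"
        unfolding e by (simp only: right_diff_distrib mult.left_commute)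
    qed
    also have "\<dots> \<le> (\<Sum>s\<in>S. u s * gauge B (x - s) - t * (u s * (q n s \<bullet> a)))"
    proof (rule sum_mono)
      fix s assume s: "s \<in> S"
      have "q n s \<bullet> (x - s) \<le> gauge B (x - s)" using q dual_ball_inner by blast
      then have "u s * (q n s \<bullet> (x - s)) \<le> u s * gauge B (x - s)" using u s mult_left_mono by blast
      then show "u s * (q n s \<bullet> (x - s)) - t * (u s * (q n s \<bullet> a)) \<le> u s * gauge B (x - s) - t * (u s * (q n s \<bullet> a))"
        by linarith
    qed
    also have "\<dots> = (\<Sum>s\<in>S. u s * gauge B (x - s)) - t * ((\<Sum>s\<in>S. u s *\<^sub>R q n s) \<bullet> a)"
      by (simp add: sum_subtractf sum_distrib_left inner_sum_left)
    finally have A: "(\<Sum>s\<in>S. u s * gauge B (z n - s)) \<le> (\<Sum>s\<in>S. u s * gauge B (x - s)) - t * ((\<Sum>s\<in>S. u s *\<^sub>R q n s) \<bullet> a)" .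
    have M: "(\<Sum>s\<in>S. u s * gauge B (x - s)) - h \<bullet> x \<le> (\<Sum>s\<in>S. u s * gauge B (z n - s)) - h \<bullet> z n" using min by blast
    have hz: "h \<bullet> z n = h \<bullet> x - t * (h \<bullet> a)" unfolding zn by (simp add: inner_diff_right)
    from A M hz have "t * ((\<Sum>s\<in>S. u s *\<^sub>R q n s) \<bullet> a - h \<bullet> a) \<le> 0" by (simp add: algebra_simps)
    then have "(\<Sum>s\<in>S. u s *\<^sub>R q n s) \<bullet> a - h \<bullet> a \<le> 0" using t by (simp add: mult_le_0_iff)
    then show ?thesis unfolding F_def by (simp add: inner_diff_left)
  qed
  have "\<forall>n. \<forall>s\<in>S. q n s \<in> dual_ball B" using q by blast
  then obtain r lp where r: "strict_mono r" "\<forall>s\<in>S. lp s \<in> dual_ball B \<and> (\<lambda>n. q (r n) s) \<longlonglongrightarrow> lp s"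
    using finite_subseq[OF S dual_ball_compact] by blast
  have zlim: "z \<longlonglongrightarrow> x"
  proof -
    have "(\<lambda>n. x - inverse (real (Suc n)) *\<^sub>R a) \<longlonglongrightarrow> x - 0 *\<^sub>R a"
      by (intro tendsto_intros LIMSEQ_inverse_real_of_nat)
    then show ?thesis unfolding z_def by simp
  qed
  have zr: "(\<lambda>n. z (r n)) \<longlonglongrightarrow> x" using LIMSEQ_subseq_LIMSEQ[OF zlim r(1)] by (simp add: comp_def)
  have lpP: "lp \<in> P" unfolding P_def
  proof (intro CollectI ballI conjI)
    fix s assume s: "s \<in> S"
    show "lp s \<in> dual_ball B" using r s by blast
    have "(\<lambda>n. q (r n) s \<bullet> (z (r n) - s)) \<longlonglongrightarrow> lp s \<bullet> (x - s)" using r s zr by (intro tendsto_intros) auto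
    moreover have "(\<lambda>n. gauge B (z (r n) - s)) \<longlonglongrightarrow> gauge B (x - s)"
      by (rule gauge_tendsto) (intro tendsto_intros zr)
    moreover have "(\<lambda>n. q (r n) s \<bullet> (z (r n) - s)) = (\<lambda>n. gauge B (z (r n) - s))" using q by auto
    ultimately show "lp s \<bullet> (x - s) = gauge B (x - s)" using LIMSEQ_unique by metis
  qed
  have "(\<lambda>n. F (q (r n)) \<bullet> a) \<longlonglongrightarrow> F lp \<bullet> a" using Fcont[of "\<lambda>n. q (r n)" lp] r by (intro tendsto_intros) auto
  then have "F lp \<bullet> a \<le> 0" using key by (intro LIMSEQ_le_const2) auto
  moreover have "b < a \<bullet> F lp" using ab lpP unfolding K_def by blast
  ultimately show False using ab by (simp add: inner_commute)
qed

end



lemma wsum_split: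
  fixes \<phi> :: "'a \<Rightarrow> 'b::real_vector"
  assumes "finite D" "finite C"
  shows "(\<Sum>s\<in>D\<union>C. wsum_weight D w C v s *\<^sub>R \<phi> s) = (\<Sum>s\<in>D. w s *\<^sub>R \<phi> s) + (\<Sum>s\<in>C. v s *\<^sub>R \<phi> s)"
proof -
  have fin: "finite (D \<union> C)" using assms by simp
  have 1: "(\<Sum>s\<in>D\<union>C. (if s \<in> D then w s *\<^sub>R \<phi> s else 0)) = (\<Sum>s\<in>D. w s *\<^sub>R \<phi> s)"
  proof -
    have "(\<Sum>s\<in>D\<union>C. (if s \<in> D then w s *\<^sub>R \<phi> s else 0)) = (\<Sum>s\<in>{x\<in>D\<union>C. x \<in> D}. w s *\<^sub>R \<phi> s)"
      using sum.inter_filter[OF fin, of "\<lambda>s. w s *\<^sub>R \<phi> s" "\<lambda>x. x \<in> D"] by simp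
    also have "{x\<in>D\<union>C. x \<in> D} = D" by auto
    finally show ?thesis .
  qed
  have 2: "(\<Sum>s\<in>D\<union>C. (if s \<in> C then v s *\<^sub>R \<phi> s else 0)) = (\<Sum>s\<in>C. v s *\<^sub>R \<phi> s)"
  proof -
    have "(\<Sum>s\<in>D\<union>C. (if s \<in> C then v s *\<^sub>R \<phi> s else 0)) = (\<Sum>s\<in>{x\<in>D\<union>C. x \<in> C}. v s *\<^sub>R \<phi> s)"
      using sum.inter_filter[OF fin, of "\<lambda>s. v s *\<^sub>R \<phi> s" "\<lambda>x. x \<in> C"] by simp
    also have "{x\<in>D\<union>C. x \<in> C} = C" by auto
    finally show ?thesis .
  qed
  have "(\<Sum>s\<in>D\<union>C. wsum_weight D w C v s *\<^sub>R \<phi> s)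
      = (\<Sum>s\<in>D\<union>C. (if s \<in> D then w s *\<^sub>R \<phi> s else 0) + (if s \<in> C then v s *\<^sub>R \<phi> s else 0))"
    unfolding wsum_weight_def by (intro sum.cong) (auto simp: scaleR_add_left)
  also have "\<dots> = (\<Sum>s\<in>D. w s *\<^sub>R \<phi> s) + (\<Sum>s\<in>C. v s *\<^sub>R \<phi> s)"
    using 1 2 by (simp add: sum.distrib)
  finally show ?thesis .
qed

lemma wsum_split_real:
  assumes "finite D" "finite C"
  shows "(\<Sum>s\<in>D\<union>C. wsum_weight D w C v s * \<phi> s) = (\<Sum>s\<in>D. w s * \<phi> s) + (\<Sum>s\<in>C. v s * \<phi> s)"
  using wsum_split[OF assms, of w v \<phi>] by simp

lemma usc_connected:
  fixes A :: "real \<Rightarrow> 'a::euclidean_space set"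
  assumes ne: "\<forall>t\<in>{0..1}. A t \<noteq> {}" and conn: "\<forall>t\<in>{0..1}. connected (A t)"
   and bnd: "\<forall>t\<in>{0..1}. A t \<subseteq> cball 0 M"
   and cg: "\<And>tn zn t z. \<forall>n. tn n \<in> {0..1} \<and> zn n \<in> A (tn n) \<Longrightarrow> tn \<longlonglongrightarrow> t \<Longrightarrow> zn \<longlonglongrightarrow> z \<Longrightarrow> t \<in> {0..1} \<Longrightarrow> z \<in> A t"
  shows "connected (\<Union>t\<in>{0..1}. A t)"
proof (rule connectedI)
  let ?S = "\<Union>t\<in>{0..1}. A t"
  fix e1 e2 assume e1: "open e1" "open e2" "e1 \<inter> ?S \<noteq> {}" "e2 \<inter> ?S \<noteq> {}" "e1 \<inter> e2 \<inter> ?S = {}" "?S \<subseteq> e1 \<union> e2"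
  note e = e1(1,2,6,5,3,4)
  have split: "A t \<subseteq> e1 \<or> A t \<subseteq> e2" if t: "t \<in> {0..1}" for t
  proof (rule ccontr)
    assume "\<not> (A t \<subseteq> e1 \<or> A t \<subseteq> e2)"
    then have "e1 \<inter> A t \<noteq> {}" "e2 \<inter> A t \<noteq> {}" using e(3) t by blast+
    moreover have "A t \<subseteq> e1 \<union> e2" "e1 \<inter> e2 \<inter> A t = {}" using e(3,4) t by blast+
    ultimately show False using connectedD[of "A t" e1 e2] conn t e(1,2) by auto
  qed
  have clo: "closed {t\<in>{0..1}. A t \<subseteq> e}"
    if ee: "open e'" "e' \<inter> e \<inter> ?S = {}" "\<And>t. t \<in> {0..1} \<Longrightarrow> A t \<subseteq> e \<or> A t \<subseteq> e'" for e e'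
    unfolding closed_sequential_limits
  proof (intro allI impI)
    fix tn l assume h: "(\<forall>n. tn n \<in> {t\<in>{0..1}. A t \<subseteq> e}) \<and> tn \<longlonglongrightarrow> l"
    have l01: "l \<in> {0..1}"
      using closed_sequential_limits[THEN iffD1, OF closed_atLeastAtMost[of "0::real" 1], rule_format, of tn l] h by blast
    define zn where "zn = (\<lambda>n. SOME z. z \<in> A (tn n))"
    have tn01: "tn n \<in> {0..1}" for n using h by simp
    have tne: "tn n \<in> {t\<in>{0..1}. A t \<subseteq> e}" for n using h by simp
    have zn: "zn n \<in> A (tn n)" for n
    proof -
      have "A (tn n) \<noteq> {}" using ne tn01 by simp
      then have "\<exists>z. z \<in> A (tn n)" by blast
      then show ?thesis unfolding zn_def by (rule someI_ex)
    qed
    have znb: "\<forall>n. zn n \<in> cball 0 M"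
    proof
      fix n show "zn n \<in> cball 0 M" using zn[of n] bnd tn01[of n] by blast
    qed
    obtain z r where zr: "z \<in> cball 0 M" "strict_mono r" "(zn \<circ> r) \<longlonglongrightarrow> z"
      using seq_compactE[OF compact_imp_seq_compact[OF compact_cball] znb] by metis
    have tr: "(tn \<circ> r) \<longlonglongrightarrow> l" using LIMSEQ_subseq_LIMSEQ zr(2) h by blast
    have zA: "z \<in> A l" by (rule cg[of "tn \<circ> r" "zn \<circ> r"]) (use h zn tr zr l01 in auto)
    show "l \<in> {t\<in>{0..1}. A t \<subseteq> e}"
    proof (rule ccontr)
      assume "l \<notin> {t\<in>{0..1}. A t \<subseteq> e}"
      then have "A l \<subseteq> e'" using ee(3) l01 by blast
      then have "z \<in> e'" using zA by blast
      then have "eventually (\<lambda>n. (zn \<circ> r) n \<in> e') sequentially" using topological_tendstoD zr(3) ee(1) by blast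
      then obtain N where "(zn \<circ> r) N \<in> e'" unfolding eventually_sequentially by blast
      moreover have "(zn \<circ> r) N \<in> e" using zn h by auto
      moreover have "(zn \<circ> r) N \<in> ?S" using zn[of "r N"] tn01[of "r N"] by auto
      ultimately show False using ee(2) by blast
    qed
  qed
  have c1: "closed {t\<in>{0..1}. A t \<subseteq> e1}"
    by (rule clo[of e2]) (use e split in auto)
  have c2: "closed {t\<in>{0..1}. A t \<subseteq> e2}"
    by (rule clo[of e1]) (use e split in auto)
  have un: "{0..1} = {t\<in>{0..1}. A t \<subseteq> e1} \<union> {t\<in>{0..1}. A t \<subseteq> e2}"
  proof (intro equalityI subsetI)
    fix t :: real assume t: "t \<in> {0..1}"
    from split[OF t] show "t \<in> {t\<in>{0..1}. A t \<subseteq> e1} \<union> {t\<in>{0..1}. A t \<subseteq> e2}" using t by blast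
  qed auto
  have n1: "{t\<in>{0..1}. A t \<subseteq> e1} \<noteq> {}"
  proof -
    obtain z t where zt: "t \<in> {0..1}" "z \<in> A t" "z \<in> e1" using e(5) by blast
    have "\<not> A t \<subseteq> e2" using zt e(4) by blast
    then show ?thesis using split zt by blast
  qed
  have n2: "{t\<in>{0..1}. A t \<subseteq> e2} \<noteq> {}"
  proof -
    obtain z t where zt: "t \<in> {0..1}" "z \<in> A t" "z \<in> e2" using e(6) by blast
    have "\<not> A t \<subseteq> e1" using zt e(4) by blast
    then show ?thesis using split zt by blast
  qed
  have "{t\<in>{0..1}. A t \<subseteq> e1} \<inter> {t\<in>{0..1}. A t \<subseteq> e2} \<noteq> {}"
    by (rule connected_as_closed_union[OF connected_Icc un c1 c2 n1 n2])
  then obtain t where t: "t \<in> {0..1}" "A t \<subseteq> e1" "A t \<subseteq> e2" by blast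
  then show False using ne e(4) by blast
qed




locale cls = gbl B for B :: "'a::euclidean_space set" +
  fixes D :: "'a set" and w :: "'a \<Rightarrow> real"
  assumes finD: "finite D" and neD: "D \<noteq> {}" and wpos: "\<forall>d\<in>D. 0 < w d"
begin

abbreviation fD :: "'a \<Rightarrow> real" where "fD y \<equiv> (\<Sum>s\<in>D. w s * gauge B (y - s))"

lemma wnn: "\<forall>d\<in>D. 0 \<le> w d" using wpos by (simp add: less_imp_le)

lemma wD_pos: "0 < sum w D"
  using sum_pos[OF finD neD] wpos by blast

lemma dual_zero_eq: "dual_gauge B 0 = 0"
  using dual_nonneg[of 0] dual_le_iff[of 0 0] by simp

lemma dual_in_ball: "dual_gauge B q \<le> 1 \<Longrightarrow> q \<in> dual_ball B"
  unfolding dual_ball_def by simp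

lemma fD_cont: "(zn \<longlongrightarrow> z) F \<Longrightarrow> ((\<lambda>n. fD (zn n)) \<longlongrightarrow> fD z) F"
  by (intro tendsto_intros gauge_tendsto)

lemma coerc:
  assumes "0 \<le> t" "t \<le> 1"
  shows "(sum w D - skewness B * dual_gauge B (-g)) * gauge B z - (\<Sum>s\<in>D. w s * gauge B s) \<le> fD z - t * (g \<bullet> z)"
proof -
  have "(\<Sum>s\<in>D. w s * (gauge B z - gauge B s)) \<le> fD z"
  proof (rule sum_mono)
    fix s assume s: "s \<in> D"
    have "gauge B z \<le> gauge B (z - s) + gauge B s" using gauge_add[of "z - s" s] by simp
    then show "w s * (gauge B z - gauge B s) \<le> w s * gauge B (z - s)"
      using wnn s mult_left_mono by (metis diff_le_eq)
  qed
  then have A: "sum w D * gauge B z - (\<Sum>s\<in>D. w s * gauge B s) \<le> fD z"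
    by (simp add: right_diff_distrib sum_subtractf sum_distrib_right)
  have "g \<bullet> z = (-g) \<bullet> (-z)" by simp
  also have "\<dots> \<le> dual_gauge B (-g) * gauge B (-z)" by (rule inner_le_dual_gauge)
  also have "\<dots> \<le> dual_gauge B (-g) * (skewness B * gauge B z)"
    using skew_le' dual_nonneg mult_left_mono by blast
  finally have g1: "g \<bullet> z \<le> skewness B * dual_gauge B (-g) * gauge B z" by (simp add: mult_ac)
  have nn: "0 \<le> skewness B * dual_gauge B (-g) * gauge B z"
    using skew_nonneg dual_nonneg gauge_nonneg by simp
  have "t * (g \<bullet> z) \<le> skewness B * dual_gauge B (-g) * gauge B z"
  proof (cases "g \<bullet> z \<le> 0")
    case True then show ?thesis using nn assms by (smt (verit) mult_nonneg_nonpos)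
  next
    case False
    then have "t * (g \<bullet> z) \<le> 1 * (g \<bullet> z)" using assms by (intro mult_right_mono) auto
    then show ?thesis using g1 by simp
  qed
  then show ?thesis using A by (simp add: algebra_simps)
qed

lemma good_CL:
  assumes p: "\<forall>s\<in>D. p s \<in> dual_ball B \<and> p s \<bullet> (y - s) = gauge B (y - s)"
    and lt: "skewness B * dual_gauge B (-(\<Sum>s\<in>D. w s *\<^sub>R p s)) < sum w D"
  shows "y \<in> CL B D w"
proof -
  define g where "g = (\<Sum>s\<in>D. w s *\<^sub>R p s)"
  define q where "q = - g"
  define c where "c = dual_gauge B q"
  have c0: "0 \<le> c" unfolding c_def by (rule dual_nonneg)
  have subi: "fD y + g \<bullet> (z - y) \<le> fD z" for z
    unfolding g_def by (rule sub_ineq[OF wnn p])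
  have sk: "0 \<le> skewness B" by (rule skew_nonneg)
  have wD: "0 < sum w D" by (rule wD_pos)
  show ?thesis
  proof (cases "c = 0")
    case True
    then have q0: "q = 0" using dual_zero unfolding c_def by simp
    define e where "e = sum w D / (skewness B + 1)"
    have e: "0 < e" unfolding e_def using wD sk by simp
    have se: "skewness B * sum (\<lambda>_. e) {y} < sum w D"
    proof -
      have "skewness B * e = sum w D * (skewness B / (skewness B + 1))" unfolding e_def using sk by (simp add: field_simps)
      also have "\<dots> < sum w D * 1" using wD sk by (intro mult_strict_left_mono) auto
      finally show ?thesis by simp
    qed
    have "y \<in> FW B (D \<union> {y}) (wsum_weight D w {y} (\<lambda>_. e))"
      unfolding FW_def
    proof (intro CollectI allI)
      fix z
      have "fD y \<le> fD z" using subi[of z] q0 unfolding q_def by simp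
      moreover have "0 \<le> e * gauge B (z - y)" using e gauge_nonneg by simp
      ultimately show "(\<Sum>s\<in>D \<union> {y}. wsum_weight D w {y} (\<lambda>_. e) s * gauge B (y - s))
          \<le> (\<Sum>s\<in>D \<union> {y}. wsum_weight D w {y} (\<lambda>_. e) s * gauge B (z - s))"
        unfolding wsum_split_real[OF finD finite.insertI[OF finite.emptyI]] by (simp add: gauge_0)
    qed
    then show ?thesis unfolding CL_def
      by (intro UnionI[of "FW B (D \<union> {y}) (wsum_weight D w {y} (\<lambda>_. e))"] CollectI exI[of _ "{y}"] exI[of _ "\<lambda>_. e"])
        (use e se in auto)
  next
    case False
    then have cp: "0 < c" using c0 by simp
    define q' where "q' = inverse c *\<^sub>R q"
    have "dual_gauge B q' \<le> inverse c * c" unfolding q'_def c_def using dual_scale[of "inverse c" q] cp c_def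
      by simp
    then have d1: "dual_gauge B q' \<le> 1" using cp by simp
    have "c \<le> c * dual_gauge B q'"
    proof -
      have "q = c *\<^sub>R q'" unfolding q'_def using cp by simp
      then have "dual_gauge B q \<le> c * dual_gauge B q'" using dual_scale[of c q'] c0 by simp
      then show ?thesis unfolding c_def .
    qed
    then have "1 \<le> dual_gauge B q'" using cp by simp
    then have dq1: "dual_gauge B q' = 1" using d1 by simp
    obtain x0 where x0: "x0 \<in> B" "q' \<bullet> x0 = 1" using dual_attains[of q'] dq1 by auto
    have gx0: "gauge B x0 = 1"
    proof -
      have "gauge B x0 \<le> 1" using x0 gauge_le_1 by blast
      moreover have "q' \<bullet> x0 \<le> gauge B x0" using dual_ball_inner dual_in_ball[OF d1] by blast
      ultimately show ?thesis using x0 by simp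
    qed
    have sc: "skewness B * sum (\<lambda>_. c) {y - x0} < sum w D"
      using lt unfolding c_def q_def g_def by simp
    have "y \<in> FW B (D \<union> {y - x0}) (wsum_weight D w {y - x0} (\<lambda>_. c))"
      unfolding FW_def
    proof (intro CollectI allI)
      fix z
      have cq: "c *\<^sub>R q' = q" unfolding q'_def using cp by simp
      have "c * gauge B (z - (y - x0)) \<ge> c * (q' \<bullet> (z - (y - x0)))"
        using dual_ball_inner dual_in_ball[OF d1] c0 mult_left_mono by blast
      also have "c * (q' \<bullet> (z - (y - x0))) = q \<bullet> (z - y) + c"
        using x0(2) cq[symmetric] by (simp add: inner_diff_right inner_add_right algebra_simps)
      finally have "q \<bullet> (z - y) + c \<le> c * gauge B (z - (y - x0))" .
      moreover have "fD y + g \<bullet> (z - y) \<le> fD z" by (rule subi)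
      moreover have "q \<bullet> (z - y) = - (g \<bullet> (z - y))" unfolding q_def by simp
      ultimately have "fD y + c * gauge B (y - (y - x0)) \<le> fD z + c * gauge B (z - (y - x0))"
        using gx0 by simp
      then show "(\<Sum>s\<in>D \<union> {y - x0}. wsum_weight D w {y - x0} (\<lambda>_. c) s * gauge B (y - s))
          \<le> (\<Sum>s\<in>D \<union> {y - x0}. wsum_weight D w {y - x0} (\<lambda>_. c) s * gauge B (z - s))"
        unfolding wsum_split_real[OF finD finite.insertI[OF finite.emptyI]] by simp
    qed
    then show ?thesis unfolding CL_def
      by (intro UnionI[of "FW B (D \<union> {y - x0}) (wsum_weight D w {y - x0} (\<lambda>_. c))"] CollectI exI[of _ "{y - x0}"] exI[of _ "\<lambda>_. c"])
        (use cp sc in auto)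
  qed
qed

end



context cls
begin

lemma CL_good:
  assumes "y \<in> CL B D w"
  shows "\<exists>p. (\<forall>s\<in>D. p s \<in> dual_ball B \<and> p s \<bullet> (y - s) = gauge B (y - s))
           \<and> skewness B * dual_gauge B (-(\<Sum>s\<in>D. w s *\<^sub>R p s)) < sum w D"
proof -
  obtain C v where Cv: "finite C" "C \<noteq> {}" "\<forall>c\<in>C. 0 < v c" "skewness B * sum v C < sum w D"
    and y: "y \<in> FW B (D \<union> C) (wsum_weight D w C v)"
    using assms unfolding CL_def by blast
  define u where "u = wsum_weight D w C v"
  have u: "\<forall>s\<in>D \<union> C. 0 \<le> u s" unfolding u_def wsum_weight_def using wpos Cv(3)
    by (auto intro!: add_nonneg_nonneg simp: less_imp_le)
  have fin: "finite (D \<union> C)" using finD Cv(1) by simp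
  have min: "\<forall>z. (\<Sum>s\<in>D \<union> C. u s * gauge B (y - s)) - 0 \<bullet> y \<le> (\<Sum>s\<in>D \<union> C. u s * gauge B (z - s)) - 0 \<bullet> z"
    using y unfolding FW_def u_def by simp
  obtain p where p: "\<forall>s\<in>D \<union> C. p s \<in> dual_ball B \<and> p s \<bullet> (y - s) = gauge B (y - s)"
     and ps: "(\<Sum>s\<in>D \<union> C. u s *\<^sub>R p s) = 0"
    using opt_hard[OF fin u min] by blast
  have "(\<Sum>s\<in>D. w s *\<^sub>R p s) + (\<Sum>s\<in>C. v s *\<^sub>R p s) = 0"
    using ps wsum_split[OF finD Cv(1), of w v p] unfolding u_def by simp
  then have eq: "-(\<Sum>s\<in>D. w s *\<^sub>R p s) = (\<Sum>s\<in>C. v s *\<^sub>R p s)" by (rule minus_unique)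
  have "dual_gauge B (\<Sum>s\<in>C. v s *\<^sub>R p s) \<le> sum v C"
    by (rule dual_sum_le) (use p Cv(3) in \<open>auto simp: less_imp_le\<close>)
  then have "skewness B * dual_gauge B (-(\<Sum>s\<in>D. w s *\<^sub>R p s)) \<le> skewness B * sum v C"
    unfolding eq using skew_nonneg mult_left_mono by blast
  then show ?thesis using p Cv(4) by force
qed

lemma FW_sub_CL: "FW B D w \<subseteq> CL B D w"
proof
  fix x assume x: "x \<in> FW B D w"
  have min: "\<forall>z. fD x - 0 \<bullet> x \<le> fD z - 0 \<bullet> z" using x unfolding FW_def by simp
  obtain p where p: "\<forall>s\<in>D. p s \<in> dual_ball B \<and> p s \<bullet> (x - s) = gauge B (x - s)"
     and ps: "(\<Sum>s\<in>D. w s *\<^sub>R p s) = 0"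
    using opt_hard[OF finD wnn min] by blast
  show "x \<in> CL B D w"
    by (rule good_CL[OF p]) (use ps dual_zero_eq wD_pos in simp)
qed

lemma Cpi_props:
  assumes p: "\<forall>s\<in>D. p s \<in> dual_ball B"
    and lt: "skewness B * dual_gauge B (-(\<Sum>s\<in>D. w s *\<^sub>R p s)) < sum w D"
  shows "Cpi B D p \<subseteq> CL B D w" "bounded (Cpi B D p)"
proof -
  show "Cpi B D p \<subseteq> CL B D w"
  proof
    fix z assume "z \<in> Cpi B D p"
    then have "\<forall>s\<in>D. p s \<bullet> (z - s) = gauge B (z - s)" using Cpi_char[OF p] by blast
    then show "z \<in> CL B D w" using good_CL[OF _ lt] p by blast
  qed
  define g where "g = (\<Sum>s\<in>D. w s *\<^sub>R p s)"
  define \<delta> where "\<delta> = sum w D - skewness B * dual_gauge B (-g)"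
  have dp: "\<delta> > 0" using lt unfolding \<delta>_def g_def by simp
  define K where "K = (\<Sum>s\<in>D. w s * gauge B s) - (\<Sum>s\<in>D. w s * (p s \<bullet> s))"
  obtain R where R: "R > 0" "\<And>x. x \<in> B \<Longrightarrow> norm x \<le> R" using gb_R by metis
  have "norm z \<le> R * (K / \<delta>)" if z: "z \<in> Cpi B D p" for z
  proof -
    have pz: "\<forall>s\<in>D. p s \<bullet> (z - s) = gauge B (z - s)" using Cpi_char[OF p] z by blast
    have "fD z = (\<Sum>s\<in>D. w s * (p s \<bullet> z) - w s * (p s \<bullet> s))"
    proof (rule sum.cong[OF refl])
      fix s assume "s \<in> D"
      then have "gauge B (z - s) = p s \<bullet> (z - s)" using pz by simp
      then show "w s * gauge B (z - s) = w s * (p s \<bullet> z) - w s * (p s \<bullet> s)"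
        by (simp add: inner_diff_right right_diff_distrib)
    qed
    also have "\<dots> = g \<bullet> z - (\<Sum>s\<in>D. w s * (p s \<bullet> s))"
      unfolding g_def by (simp add: sum_subtractf inner_sum_left)
    finally have fz: "fD z - 1 * (g \<bullet> z) = - (\<Sum>s\<in>D. w s * (p s \<bullet> s))" by simp
    have "\<delta> * gauge B z - (\<Sum>s\<in>D. w s * gauge B s) \<le> fD z - 1 * (g \<bullet> z)"
      unfolding \<delta>_def by (rule coerc) auto
    then have "\<delta> * gauge B z \<le> K" unfolding K_def using fz by simp
    then have "gauge B z \<le> K / \<delta>" using dp by (simp add: field_simps)
    moreover have "norm z \<le> R * gauge B z" by (rule norm_le_gauge[OF R])
    ultimately show ?thesis using R(1) by (smt (verit) mult_left_mono)
  qed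
  then show "bounded (Cpi B D p)" unfolding bounded_iff by blast
qed

definition Amin :: "'a \<Rightarrow> real \<Rightarrow> 'a set" where
  "Amin g t = {z. \<forall>z'. fD z - t * (g \<bullet> z) \<le> fD z' - t * (g \<bullet> z')}"

lemma Amin_CL:
  assumes lt: "skewness B * dual_gauge B (-g) < sum w D" and t: "0 \<le> t" "t \<le> 1" and z: "z \<in> Amin g t"
  shows "z \<in> CL B D w"
proof -
  have min: "\<forall>y. fD z - (t *\<^sub>R g) \<bullet> z \<le> fD y - (t *\<^sub>R g) \<bullet> y" using z unfolding Amin_def by simp
  obtain p where p: "\<forall>s\<in>D. p s \<in> dual_ball B \<and> p s \<bullet> (z - s) = gauge B (z - s)"
     and ps: "(\<Sum>s\<in>D. w s *\<^sub>R p s) = t *\<^sub>R g"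
    using opt_hard[OF finD wnn min] by blast
  have "dual_gauge B (-(t *\<^sub>R g)) \<le> t * dual_gauge B (-g)"
    using dual_scale[of t "-g"] t by simp
  also have "\<dots> \<le> 1 * dual_gauge B (-g)" using t dual_nonneg by (intro mult_right_mono) auto
  finally have "skewness B * dual_gauge B (-(t *\<^sub>R g)) \<le> skewness B * dual_gauge B (-g)"
    using skew_nonneg mult_left_mono by simp
  then show ?thesis by (intro good_CL[OF p]) (use ps lt in simp)
qed

lemma Amin_1:
  assumes p: "\<forall>s\<in>D. p s \<in> dual_ball B \<and> p s \<bullet> (y - s) = gauge B (y - s)"
  shows "y \<in> Amin (\<Sum>s\<in>D. w s *\<^sub>R p s) 1"
  unfolding Amin_def
proof (intro CollectI allI)
  fix z
  have "fD y + (\<Sum>s\<in>D. w s *\<^sub>R p s) \<bullet> (z - y) \<le> fD z" by (rule sub_ineq[OF wnn p])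
  then show "fD y - 1 * ((\<Sum>s\<in>D. w s *\<^sub>R p s) \<bullet> y) \<le> fD z - 1 * ((\<Sum>s\<in>D. w s *\<^sub>R p s) \<bullet> z)"
    by (simp add: inner_diff_right)
qed

lemma Amin_0: "Amin g 0 = FW B D w"
  unfolding Amin_def FW_def by simp

lemma Amin_bound:
  assumes lt: "skewness B * dual_gauge B (-g) < sum w D" and t: "0 \<le> t" "t \<le> 1"
  obtains M where "M \<ge> 0" "\<And>t z. 0 \<le> t \<Longrightarrow> t \<le> 1 \<Longrightarrow> fD z - t * (g \<bullet> z) \<le> fD 0 \<Longrightarrow> norm z \<le> M"
    "\<And>t z. 0 \<le> t \<Longrightarrow> t \<le> 1 \<Longrightarrow> norm z > M \<Longrightarrow> fD z - t * (g \<bullet> z) > fD 0"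
proof -
  define \<delta> where "\<delta> = sum w D - skewness B * dual_gauge B (-g)"
  have dp: "\<delta> > 0" using lt unfolding \<delta>_def by simp
  define K1 where "K1 = (\<Sum>s\<in>D. w s * gauge B s)"
  obtain R where R: "R > 0" "\<And>x. x \<in> B \<Longrightarrow> norm x \<le> R" using gb_R by metis
  define M where "M = R * ((fD 0 + K1) / \<delta>)"
  have K1: "0 \<le> K1" unfolding K1_def using wnn gauge_nonneg by (intro sum_nonneg) simp
  have f0: "0 \<le> fD 0" using wnn gauge_nonneg by (intro sum_nonneg) simp
  have M0: "M \<ge> 0" unfolding M_def using R dp K1 f0 by simp
  have key: "norm z \<le> R * ((fD z - t * (g \<bullet> z) + K1) / \<delta>)" if t: "0 \<le> t" "t \<le> 1" for z t
  proof -
    have "\<delta> * gauge B z - K1 \<le> fD z - t * (g \<bullet> z)" unfolding \<delta>_def K1_def by (rule coerc[OF t])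
    then have "gauge B z \<le> (fD z - t * (g \<bullet> z) + K1) / \<delta>" using dp by (simp add: field_simps)
    moreover have "norm z \<le> R * gauge B z" by (rule norm_le_gauge[OF R])
    ultimately show ?thesis using R(1) by (smt (verit) mult_left_mono)
  qed
  show ?thesis
  proof (rule that[OF M0])
    fix t :: real and z :: 'a assume t: "0 \<le> t" "t \<le> 1" and le: "fD z - t * (g \<bullet> z) \<le> fD 0"
    have "R * ((fD z - t * (g \<bullet> z) + K1) / \<delta>) \<le> M"
      unfolding M_def using R dp le by (intro mult_left_mono divide_right_mono) auto
    then show "norm z \<le> M" using key[OF t, of z] by linarith
  next
    fix t :: real and z :: 'a assume t: "0 \<le> t" "t \<le> 1" and gt: "norm z > M"
    show "fD z - t * (g \<bullet> z) > fD 0"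
    proof (rule ccontr)
      assume "\<not> ?thesis"
      then have "R * ((fD z - t * (g \<bullet> z) + K1) / \<delta>) \<le> M"
        unfolding M_def using R dp by (intro mult_left_mono divide_right_mono) auto
      then show False using key[OF t, of z] gt by simp
    qed
  qed
qed

lemma Amin_props:
  assumes lt: "skewness B * dual_gauge B (-g) < sum w D"
  shows "\<exists>M. \<forall>t\<in>{0..1}. Amin g t \<noteq> {} \<and> convex (Amin g t) \<and> Amin g t \<subseteq> cball 0 M"
proof -
  obtain M where M: "M \<ge> 0" "\<And>t z. 0 \<le> t \<Longrightarrow> t \<le> 1 \<Longrightarrow> fD z - t * (g \<bullet> z) \<le> fD 0 \<Longrightarrow> norm z \<le> M"
    "\<And>t z. 0 \<le> t \<Longrightarrow> t \<le> 1 \<Longrightarrow> norm z > M \<Longrightarrow> fD z - t * (g \<bullet> z) > fD 0"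
    using Amin_bound[OF lt, of 0] by auto
  have "Amin g t \<noteq> {} \<and> convex (Amin g t) \<and> Amin g t \<subseteq> cball 0 M" if t: "t \<in> {0..1}" for t
  proof (intro conjI)
    have t0: "0 \<le> t" "t \<le> 1" using t by auto
    have cont: "continuous_on (cball 0 M) (\<lambda>z. fD z - t * (g \<bullet> z))"
      by (intro continuous_intros continuous_on_compose2[OF gauge_cont]) auto
    obtain m where m: "m \<in> cball 0 M" "\<forall>z\<in>cball 0 M. fD m - t * (g \<bullet> m) \<le> fD z - t * (g \<bullet> z)"
      using continuous_attains_inf[OF compact_cball _ cont] M(1) by auto
    have "m \<in> Amin g t" unfolding Amin_def
    proof (intro CollectI allI)
      fix z
      show "fD m - t * (g \<bullet> m) \<le> fD z - t * (g \<bullet> z)"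
      proof (cases "z \<in> cball 0 M")
        case True then show ?thesis using m by blast
      next
        case False
        then have "norm z > M" by simp
        then have "fD z - t * (g \<bullet> z) > fD 0" using M(3) t0 by blast
        moreover have "fD m - t * (g \<bullet> m) \<le> fD 0 - t * (g \<bullet> 0)" using m(2)[rule_format, of 0] M(1) by simp
        ultimately show ?thesis by simp
      qed
    qed
    then show "Amin g t \<noteq> {}" by blast
    show "Amin g t \<subseteq> cball 0 M"
    proof
      fix z assume "z \<in> Amin g t"
      then have "fD z - t * (g \<bullet> z) \<le> fD 0 - t * (g \<bullet> 0)" unfolding Amin_def by blast
      then show "z \<in> cball 0 M" using M(2)[OF t0] by simp
    qed
    show "convex (Amin g t)"
    proof (rule convexI)
      fix z1 z2 and a b :: real assume z: "z1 \<in> Amin g t" "z2 \<in> Amin g t" and ab: "0 \<le> a" "0 \<le> b" "a + b = 1"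
      show "a *\<^sub>R z1 + b *\<^sub>R z2 \<in> Amin g t" unfolding Amin_def
      proof (intro CollectI allI)
        fix z'
        have b: "b = 1 - a" using ab by simp
        have "fD (a *\<^sub>R z1 + b *\<^sub>R z2) \<le> (\<Sum>s\<in>D. w s * (a * gauge B (z1 - s) + (1 - a) * gauge B (z2 - s)))"
        proof (rule sum_mono)
          fix s assume s: "s \<in> D"
          have "a *\<^sub>R (z1 - s) + b *\<^sub>R (z2 - s) = a *\<^sub>R z1 + b *\<^sub>R z2 - (a + b) *\<^sub>R s"
            by (simp add: algebra_simps)
          then have "a *\<^sub>R z1 + b *\<^sub>R z2 - s = a *\<^sub>R (z1 - s) + (1 - a) *\<^sub>R (z2 - s)" using ab(3) b by simp
          then have "gauge B (a *\<^sub>R z1 + b *\<^sub>R z2 - s) \<le> a * gauge B (z1 - s) + (1 - a) * gauge B (z2 - s)"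
            using gauge_convex[of a "z1 - s" "z2 - s"] ab b by simp
          then show "w s * gauge B (a *\<^sub>R z1 + b *\<^sub>R z2 - s) \<le> w s * (a * gauge B (z1 - s) + (1 - a) * gauge B (z2 - s))"
            using wnn s mult_left_mono by blast
        qed
        also have "\<dots> = (\<Sum>s\<in>D. a * (w s * gauge B (z1 - s)) + (1 - a) * (w s * gauge B (z2 - s)))"
          by (intro sum.cong) (auto simp: algebra_simps)
        also have "\<dots> = a * fD z1 + (1 - a) * fD z2"
          by (simp only: sum.distrib sum_distrib_left)
        finally have fc: "fD (a *\<^sub>R z1 + b *\<^sub>R z2) \<le> a * fD z1 + (1 - a) * fD z2" .
        have lin: "t * (g \<bullet> (a *\<^sub>R z1 + b *\<^sub>R z2)) = a * (t * (g \<bullet> z1)) + b * (t * (g \<bullet> z2))"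
          by (simp add: inner_add_right algebra_simps)
        have h1: "fD z1 - t * (g \<bullet> z1) \<le> fD z' - t * (g \<bullet> z')" using z(1) unfolding Amin_def by blast
        have h2: "fD z2 - t * (g \<bullet> z2) \<le> fD z' - t * (g \<bullet> z')" using z(2) unfolding Amin_def by blast
        have c1: "a * (fD z1 - t * (g \<bullet> z1)) \<le> a * (fD z' - t * (g \<bullet> z'))" using h1 ab by (intro mult_left_mono) auto
        have c2: "b * (fD z2 - t * (g \<bullet> z2)) \<le> b * (fD z' - t * (g \<bullet> z'))" using h2 ab by (intro mult_left_mono) auto
        have yy: "a * (fD z' - t * (g \<bullet> z')) + b * (fD z' - t * (g \<bullet> z')) = fD z' - t * (g \<bullet> z')"
          using ab(3) distrib_right[of a b "fD z' - t * (g \<bullet> z')"] by simp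
        have fc': "fD (a *\<^sub>R z1 + b *\<^sub>R z2) \<le> a * fD z1 + b * fD z2" using fc b by simp
        show "fD (a *\<^sub>R z1 + b *\<^sub>R z2) - t * (g \<bullet> (a *\<^sub>R z1 + b *\<^sub>R z2)) \<le> fD z' - t * (g \<bullet> z')"
          using fc' lin c1 c2 yy unfolding right_diff_distrib by linarith
      qed
    qed
  qed
  then show ?thesis by blast
qed

lemma Amin_cg:
  assumes h: "\<forall>n. tn n \<in> {0..1} \<and> zn n \<in> Amin g (tn n)" and tl: "tn \<longlonglongrightarrow> t" and zl: "zn \<longlonglongrightarrow> z"
  shows "z \<in> Amin g t"
  unfolding Amin_def
proof (intro CollectI allI)
  fix z'
  have "(\<lambda>n. fD (zn n) - tn n * (g \<bullet> zn n)) \<longlonglongrightarrow> fD z - t * (g \<bullet> z)"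
    by (intro tendsto_intros fD_cont zl tl)
  moreover have "(\<lambda>n. fD z' - tn n * (g \<bullet> z')) \<longlonglongrightarrow> fD z' - t * (g \<bullet> z')"
    by (intro tendsto_intros tl)
  moreover have "\<forall>n. fD (zn n) - tn n * (g \<bullet> zn n) \<le> fD z' - tn n * (g \<bullet> z')" using h unfolding Amin_def by blast
  ultimately show "fD z - t * (g \<bullet> z) \<le> fD z' - t * (g \<bullet> z')" by (intro LIMSEQ_le) auto
qed

lemma Amin_connected:
  assumes lt: "skewness B * dual_gauge B (-g) < sum w D"
  shows "connected (\<Union>t\<in>{0..1}. Amin g t)"
proof -
  obtain M where M: "\<forall>t\<in>{0..1}. Amin g t \<noteq> {} \<and> convex (Amin g t) \<and> Amin g t \<subseteq> cball 0 M"
    using Amin_props[OF lt] by blast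
  show ?thesis
  proof (rule usc_connected[of "Amin g" M])
    show "\<forall>t\<in>{0..1}. Amin g t \<noteq> {}" using M by simp
    show "\<forall>t\<in>{0..1}. connected (Amin g t)" using M by (simp add: convex_connected)
    show "\<forall>t\<in>{0..1}. Amin g t \<subseteq> cball 0 M" using M by simp
  qed (rule Amin_cg)
qed

end



theorem mainTheorem19:
  fixes B :: "'a::euclidean_space set" and D :: "'a set" and w :: "'a \<Rightarrow> real"
  assumes "gauge_ball B"
    and "finite D" and "D \<noteq> {}" and "\<forall>d\<in>D. 0 < w d"
  shows "connected (CL B D w)
    \<and> FW B D w \<subseteq> CL B D w
    \<and> CL B D w \<subseteq> EH B D
    \<and> (\<exists>\<E>. (\<forall>E\<in>\<E>. elementary_convex B D E \<and> bounded E) \<and> CL B D w = \<Union>\<E>)"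
proof -
  interpret cls B D w
    by (unfold_locales) (use assms in \<open>auto simp: gauge_ball_def\<close>)
  define \<E> where "\<E> = {Cpi B D p | p. (\<forall>s\<in>D. p s \<in> dual_ball B)
      \<and> skewness B * dual_gauge B (-(\<Sum>s\<in>D. w s *\<^sub>R p s)) < sum w D \<and> Cpi B D p \<noteq> {}}"
  have Eprops: "\<forall>E\<in>\<E>. elementary_convex B D E \<and> bounded E \<and> E \<subseteq> CL B D w"
  proof
    fix E assume "E \<in> \<E>"
    then obtain p where p: "\<forall>s\<in>D. p s \<in> dual_ball B"
      "skewness B * dual_gauge B (-(\<Sum>s\<in>D. w s *\<^sub>R p s)) < sum w D" "Cpi B D p \<noteq> {}" "E = Cpi B D p"
      unfolding \<E>_def by blast
    have "elementary_convex B D E" unfolding elementary_convex_def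
      by (rule exI[of _ p]) (use p in simp)
    then show "elementary_convex B D E \<and> bounded E \<and> E \<subseteq> CL B D w"
      using p(4) Cpi_props[OF p(1,2)] by simp
  qed
  have CLE: "CL B D w = \<Union>\<E>"
  proof
    show "\<Union>\<E> \<subseteq> CL B D w" using Eprops by blast
    show "CL B D w \<subseteq> \<Union>\<E>"
    proof
      fix y assume y: "y \<in> CL B D w"
      obtain p where p: "\<forall>s\<in>D. p s \<in> dual_ball B \<and> p s \<bullet> (y - s) = gauge B (y - s)"
        and lt: "skewness B * dual_gauge B (-(\<Sum>s\<in>D. w s *\<^sub>R p s)) < sum w D"
        using CL_good[OF y] by blast
      have pb: "\<forall>s\<in>D. p s \<in> dual_ball B" using p by blast
      have "y \<in> Cpi B D p" using Cpi_char[OF pb] p by blast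
      moreover then have "Cpi B D p \<in> \<E>" unfolding \<E>_def
        by (intro CollectI exI[of _ p]) (use pb lt in auto)
      ultimately show "y \<in> \<Union>\<E>" by blast
    qed
  qed
  have conn: "connected (CL B D w)"
  proof -
    define \<S> where "\<S> = {S. connected S \<and> S \<subseteq> CL B D w \<and> FW B D w \<subseteq> S}"
    have lt0: "skewness B * dual_gauge B (-(0::'a)) < sum w D" using dual_zero_eq wD_pos by simp
    obtain M where "\<forall>t\<in>{0..1}. Amin 0 t \<noteq> {} \<and> convex (Amin 0 t) \<and> Amin 0 t \<subseteq> cball 0 M"
      using Amin_props[OF lt0] by blast
    then have "Amin 0 0 \<noteq> {}" by simp
    then have FWne: "FW B D w \<noteq> {}" using Amin_0 by simp
    have "CL B D w = \<Union>\<S>"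
    proof
      show "\<Union>\<S> \<subseteq> CL B D w" unfolding \<S>_def by blast
      show "CL B D w \<subseteq> \<Union>\<S>"
      proof
        fix y assume y: "y \<in> CL B D w"
        obtain p where p: "\<forall>s\<in>D. p s \<in> dual_ball B \<and> p s \<bullet> (y - s) = gauge B (y - s)"
          and lt: "skewness B * dual_gauge B (-(\<Sum>s\<in>D. w s *\<^sub>R p s)) < sum w D"
          using CL_good[OF y] by blast
        define g where "g = (\<Sum>s\<in>D. w s *\<^sub>R p s)"
        have lt': "skewness B * dual_gauge B (-g) < sum w D" using lt unfolding g_def .
        let ?S = "\<Union>t\<in>{0..1}. Amin g t"
        have "connected ?S" by (rule Amin_connected[OF lt'])
        moreover have "?S \<subseteq> CL B D w" using Amin_CL[OF lt'] by auto
        moreover have "FW B D w \<subseteq> ?S"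
        proof -
          have "Amin g 0 \<subseteq> ?S" by (rule UN_upper) simp
          then show ?thesis using Amin_0 by simp
        qed
        moreover have "y \<in> ?S"
        proof -
          have "y \<in> Amin g 1" unfolding g_def by (rule Amin_1[OF p])
          then show ?thesis using UN_I[of 1 "{0..1}" y "Amin g"] by simp
        qed
        ultimately have "?S \<in> \<S>" "y \<in> ?S" unfolding \<S>_def by simp_all
        then show "y \<in> \<Union>\<S>" by (rule UnionI)
      qed
    qed
    moreover have "connected (\<Union>\<S>)"
    proof (rule connected_Union)
      show "\<And>S. S \<in> \<S> \<Longrightarrow> connected S" unfolding \<S>_def by blast
      have "FW B D w \<subseteq> \<Inter>\<S>" unfolding \<S>_def by blast
      then show "\<Inter>\<S> \<noteq> {}" using FWne by blast
    qed
    ultimately show ?thesis by simp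
  qed
  have EH: "CL B D w \<subseteq> EH B D"
  proof
    fix y assume "y \<in> CL B D w"
    then obtain E where E: "E \<in> \<E>" "y \<in> E" using CLE by blast
    then have "E \<in> {E. elementary_convex B D E \<and> bounded E}" using Eprops by simp
    then show "y \<in> EH B D" unfolding EH_def using E(2) by (rule UnionI)
  qed
  have "(\<forall>E\<in>\<E>. elementary_convex B D E \<and> bounded E) \<and> CL B D w = \<Union>\<E>" using CLE Eprops by simp
  then have ex: "\<exists>\<E>. (\<forall>E\<in>\<E>. elementary_convex B D E \<and> bounded E) \<and> CL B D w = \<Union>\<E>" by (rule exI)
  show ?thesis using conn FW_sub_CL EH ex by simp
qed



end
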